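(* Let $D^d$ be the space of $\mathbb{R}^d$-valued càdlàg functions on $[0,\infty)$ with the $J_1$-topology, $D_\uparrow$ the space of non-decreasing $[0,\infty)$-valued càdlàg functions on $[0,\infty)$ with the $M_1$-topology, $C^d\subset D^d$ the continuous functions and $D_{\uparrow\uparrow}\subset D_\uparrow$ the strictly increasing ones. Then the composition map $D^d\times D_\uparrow\to D^d$, $(x,y)\mapsto x\circ y$, where the target carries the $L^1_{\mathrm{loc}}$-topology, is continuous at every point $(x,y)\in(C^d\times D_\uparrow)\cup(D^d\times D_{\uparrow\uparrow})$.
   Context: $J_1$-topology: with $\Lambda_T$ the strictly increasing continuous bijections $\lambda:[0,T]\to[0,T]$, $d^T_{J_1}(f_1,f_2)=\inf_{\lambda\in\Lambda_T}\{\sup_{t\le T}|\lambda(t)-t|\vee\sup_{t\le T}|f_1(\lambda(t))-f_2(t)|\}$ and $d_{J_1}=\int_0^\infty e^{-T}(d^T_{J_1}\wedge1)dT$. $M_1$-topology (for real-valued paths): with $\Gamma_f(T)=\{(s,z)\in[0,T]\times\mathbb{R}:z=\theta f(s-)+(1-\theta)f(s),\theta\in[0,1]\}$ and $\Pi_f(T)$ the continuous surjections $(r,u):[0,1]\to\Gamma_f(T)$ with $r(0)=0$, $r(1)=T$ (parametric representations), $d^T_{M_1}(f_1,f_2)=\inf_{(r_i,u_i)\in\Pi_{f_i}(T)}\{\sup|r_1-r_2|\vee\sup|u_1-u_2|\}$ and $d_{M_1}=\int_0^\infty e^{-T}(d^T_{M_1}\wedge1)dT$. $L^1_{\mathrm{loc}}$-topology: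 $f_n\to f$ iff $\int_0^T|f_n(t)-f(t)|dt\to0$ for every $T>0$. *)

theory Defs
  imports "HOL-Analysis.Analysis"
begin

text \<open>Paths are functions on the reals; only their values on [0,\<infinity>) matter.\<close>

definition cadlag :: "(real \<Rightarrow> 'a::metric_space) \<Rightarrow> bool" where
  "cadlag f \<longleftrightarrow> (\<forall>t\<ge>0. (f \<longlongrightarrow> f t) (at_right t)) \<and>
                 (\<forall>t>0. \<exists>l. (f \<longlongrightarrow> l) (at_left t))"

definition lft :: "(real \<Rightarrow> 'a::metric_space) \<Rightarrow> real \<Rightarrow> 'a" where
  "lft f s = (if s \<le> 0 then f 0 else Lim (at_left s) f)"

definition Dup :: "(real \<Rightarrow> real) set" where
  "Dup = {f. cadlag f \<and> mono_on {0..} f \<and> (\<forall>t\<ge>0. f t \<ge> 0)}"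

definition Dupup :: "(real \<Rightarrow> real) set" where
  "Dupup = {f. f \<in> Dup \<and> strict_mono_on {0..} f}"

definition LambdaT :: "real \<Rightarrow> (real \<Rightarrow> real) set" where
  "LambdaT T = {lam. strict_mono_on {0..T} lam \<and> continuous_on {0..T} lam \<and>
                     bij_betw lam {0..T} {0..T}}"

definition dJ1T :: "real \<Rightarrow> (real \<Rightarrow> 'a::real_normed_vector) \<Rightarrow> (real \<Rightarrow> 'a) \<Rightarrow> real" where
  "dJ1T T f1 f2 = Inf {max (Sup ((\<lambda>t. \<bar>lam t - t\<bar>) ` {0..T}))
                           (Sup ((\<lambda>t. norm (f1 (lam t) - f2 t)) ` {0..T})) | lam. lam \<in> LambdaT T}"

definition dJ1 :: "(real \<Rightarrow> 'a::real_normed_vector) \<Rightarrow> (real \<Rightarrow> 'a) \<Rightarrow> ennreal" where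
  "dJ1 f1 f2 = (\<integral>\<^sup>+ T \<in> {0<..}. ennreal (exp (- T) * min (dJ1T T f1 f2) 1) \<partial>lborel)"

definition GammaT :: "(real \<Rightarrow> real) \<Rightarrow> real \<Rightarrow> (real \<times> real) set" where
  "GammaT f T = {(s, z). s \<in> {0..T} \<and> z \<in> closed_segment (lft f s) (f s)}"

definition graph_le :: "(real \<Rightarrow> real) \<Rightarrow> real \<times> real \<Rightarrow> real \<times> real \<Rightarrow> bool" where
  "graph_le f p q \<longleftrightarrow> fst p < fst q \<or>
     (fst p = fst q \<and> \<bar>lft f (fst p) - snd p\<bar> \<le> \<bar>lft f (fst p) - snd q\<bar>)"

definition PiT :: "(real \<Rightarrow> real) \<Rightarrow> real \<Rightarrow> ((real \<Rightarrow> real) \<times> (real \<Rightarrow> real)) set" where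
  "PiT f T = {(r, u). continuous_on {0..1} r \<and> continuous_on {0..1} u \<and>
                (\<lambda>t. (r t, u t)) ` {0..1} = GammaT f T \<and> r 0 = 0 \<and> r 1 = T \<and>
                (\<forall>a b. 0 \<le> a \<and> a \<le> b \<and> b \<le> 1 \<longrightarrow> graph_le f (r a, u a) (r b, u b))}"

definition dM1T :: "real \<Rightarrow> (real \<Rightarrow> real) \<Rightarrow> (real \<Rightarrow> real) \<Rightarrow> real" where
  "dM1T T f1 f2 = Inf {max (Sup ((\<lambda>t. \<bar>r1 t - r2 t\<bar>) ` {0..1}))
                           (Sup ((\<lambda>t. \<bar>u1 t - u2 t\<bar>) ` {0..1})) | r1 u1 r2 u2.
                        (r1, u1) \<in> PiT f1 T \<and> (r2, u2) \<in> PiT f2 T}"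

definition dM1 :: "(real \<Rightarrow> real) \<Rightarrow> (real \<Rightarrow> real) \<Rightarrow> ennreal" where
  "dM1 f1 f2 = (\<integral>\<^sup>+ T \<in> {0<..}. ennreal (exp (- T) * min (dM1T T f1 f2) 1) \<partial>lborel)"

definition L1loc_tendsto :: "(nat \<Rightarrow> real \<Rightarrow> 'a::real_normed_vector) \<Rightarrow> (real \<Rightarrow> 'a) \<Rightarrow> bool" where
  "L1loc_tendsto fs f \<longleftrightarrow>
     (\<forall>T>0. (\<lambda>n. LBINT t:{0..T}. norm (fs n t - f t)) \<longlonglongrightarrow> 0)"

end

theory Submission
  imports Defs
begin

lemma cadlag_left:
  assumes "cadlag f" "t > 0"
  shows "(f \<longlongrightarrow> lft f t) (at_left t)"
proof -
  obtain l where l: "(f \<longlongrightarrow> l) (at_left t)" using assms unfolding cadlag_def by blast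
  have "lft f t = l" unfolding lft_def using assms(2) tendsto_Lim[OF _ l] by simp
  then show ?thesis using l by simp
qed

lemma cadlag_right:
  assumes "cadlag f" "t \<ge> 0"
  shows "(f \<longlongrightarrow> f t) (at_right t)"
  using assms unfolding cadlag_def by blast

lemma cadlag_isCont:
  assumes "cadlag f" "t > 0" "lft f t = f t"
  shows "isCont f t"
  unfolding isCont_def
  by (rule filterlim_split_at) (use cadlag_left[OF assms(1,2)] cadlag_right[OF assms(1)] assms in auto)

lemma cadlag_countable_disc:
  fixes f :: "real \<Rightarrow> 'a::metric_space"
  assumes "cadlag f"
  shows "countable {t. 0 < t \<and> \<not> isCont f t}"
proof -
  define J where "J m = {t. 0 < t \<and> dist (lft f t) (f t) > 1 / Suc m}" for m :: nat
  have sub: "{t. 0 < t \<and> \<not> isCont f t} \<subseteq> (\<Union>m. J m)"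
  proof
    fix t assume t: "t \<in> {t. 0 < t \<and> \<not> isCont f t}"
    then have "lft f t \<noteq> f t" using cadlag_isCont[OF assms] by auto
    then have "dist (lft f t) (f t) > 0" by simp
    then obtain m where "1 / Suc m < dist (lft f t) (f t)"
      by (metis nat_approx_posE)
    then show "t \<in> (\<Union>m. J m)" using t unfolding J_def by auto
  qed
  have "countable (J m)" for m
  proof -
    define e where "e = 1 / real (Suc m)"
    have e: "e > 0" unfolding e_def by simp
    have "\<forall>t\<in>J m. \<exists>q\<in>\<rat>. q < t \<and> (\<forall>s. q < s \<and> s < t \<longrightarrow> dist (f s) (lft f t) < e/4)"
    proof
      fix t assume "t \<in> J m"
      then have t: "t > 0" unfolding J_def by auto
      have "eventually (\<lambda>s. dist (f s) (lft f t) < e/4) (at_left t)"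
        using cadlag_left[OF assms t] e by (intro tendstoD) auto
      then obtain b where b: "b < t" "\<And>s. s > b \<Longrightarrow> s < t \<Longrightarrow> dist (f s) (lft f t) < e/4"
        unfolding eventually_at_left_field by blast
      obtain q where "q \<in> \<rat>" "b < q" "q < t" using Rats_dense_in_real[OF b(1)] by blast
      then show "\<exists>q\<in>\<rat>. q < t \<and> (\<forall>s. q < s \<and> s < t \<longrightarrow> dist (f s) (lft f t) < e/4)"
        using b by (intro bexI[of _ q]) auto
    qed
    then obtain q where q: "\<And>t. t \<in> J m \<Longrightarrow> q t \<in> \<rat> \<and> q t < t \<and>
        (\<forall>s. q t < s \<and> s < t \<longrightarrow> dist (f s) (lft f t) < e/4)"
      by metis
    have key: False if "t \<in> J m" "t' \<in> J m" "q t = q t'" "t < t'" for t t'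
    proof -
      define s where "s = (q t + t) / 2"
      have qt: "q t < t" using q that(1) by blast
      have s: "q t < s" "s < t" using qt unfolding s_def by auto
      have 1: "dist (f s) (lft f t) < e/4" using q[OF that(1)] s by blast
      have 2: "dist (f s) (lft f t') < e/4" using q[OF that(2)] s that(3,4) by auto
      have 3: "dist (f t) (lft f t') < e/4" using q[OF that(2)] qt that(3,4) by auto
      have a: "dist (lft f t) (f t) \<le> dist (lft f t) (f s) + dist (f s) (f t)" by (rule dist_triangle)
      have b: "dist (f s) (f t) \<le> dist (f s) (lft f t') + dist (lft f t') (f t)" by (rule dist_triangle)
      have "dist (lft f t) (f t) < e" using a b 1 2 3 e dist_commute[of "lft f t" "f s"] dist_commute[of "lft f t'" "f t"] by linarith
      then show False using that(1) unfolding J_def e_def by auto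
    qed
    have "inj_on q (J m)"
      by (metis inj_onI key linorder_neqE_linordered_idom)
    moreover have "q ` J m \<subseteq> \<rat>" using q by auto
    ultimately show ?thesis
      by (meson countable_image_inj_on countable_rat countable_subset)
  qed
  then show ?thesis using sub by (meson countable_UN countable_subset UNIV_I countableI_type)
qed

lemma norm_le_via_dist:
  fixes a b :: "'a::real_normed_vector"
  assumes "dist a b < 1" shows "norm a \<le> norm b + 1"
  using norm_triangle_sub[of a b] assms by (simp add: dist_norm)

lemma cadlag_local_bound:
  fixes f :: "real \<Rightarrow> 'a::real_normed_vector"
  assumes "cadlag f" "t \<ge> 0"
  shows "\<exists>d>0. \<exists>B. \<forall>s\<ge>0. \<bar>s - t\<bar> < d \<longrightarrow> norm (f s) \<le> B"
proof -
  have "eventually (\<lambda>s. dist (f s) (f t) < 1) (at_right t)"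
    using cadlag_right[OF assms] by (intro tendstoD) auto
  then obtain b where b: "b > t" "\<And>s. s > t \<Longrightarrow> s < b \<Longrightarrow> dist (f s) (f t) < 1"
    unfolding eventually_at_right_field by blast
  show ?thesis
  proof (cases "t = 0")
    case True
    have "\<forall>s\<ge>0. \<bar>s - t\<bar> < b - t \<longrightarrow> norm (f s) \<le> norm (f t) + 1"
    proof (intro allI impI)
      fix s :: real assume s: "0 \<le> s" "\<bar>s - t\<bar> < b - t"
      show "norm (f s) \<le> norm (f t) + 1"
      proof (cases "s = t")
        case False
        then have "s > t" using s True by auto
        then show ?thesis using b s by (intro norm_le_via_dist) auto
      qed simp
    qed
    moreover have "b - t > 0" using b by simp
    ultimately show ?thesis by blast
  next
    case False
    then have tp: "t > 0" using assms by simp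
    have "eventually (\<lambda>s. dist (f s) (lft f t) < 1) (at_left t)"
      using cadlag_left[OF assms(1) tp] by (intro tendstoD) auto
    then obtain a where a: "a < t" "\<And>s. s > a \<Longrightarrow> s < t \<Longrightarrow> dist (f s) (lft f t) < 1"
      unfolding eventually_at_left_field by blast
    have "\<forall>s\<ge>0. \<bar>s - t\<bar> < min (b - t) (t - a) \<longrightarrow> norm (f s) \<le> max (norm (f t)) (norm (lft f t)) + 1"
    proof (intro allI impI)
      fix s :: real assume s: "0 \<le> s" "\<bar>s - t\<bar> < min (b - t) (t - a)"
      consider "s = t" | "s > t" | "s < t" by linarith
      then show "norm (f s) \<le> max (norm (f t)) (norm (lft f t)) + 1"
      proof cases
        case 2
        then have "norm (f s) \<le> norm (f t) + 1" using b s by (intro norm_le_via_dist) auto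
        then show ?thesis by linarith
      next
        case 3
        then have "norm (f s) \<le> norm (lft f t) + 1" using a s by (intro norm_le_via_dist) auto
        then show ?thesis by linarith
      qed simp
    qed
    moreover have "min (b - t) (t - a) > 0" using a b by simp
    ultimately show ?thesis by blast
  qed
qed

lemma cadlag_bounded:
  fixes f :: "real \<Rightarrow> 'a::real_normed_vector"
  assumes "cadlag f"
  shows "\<exists>B. \<forall>t\<in>{0..T}. norm (f t) \<le> B"
proof -
  have "\<forall>t\<in>{0..T}. \<exists>d. d > 0 \<and> (\<exists>B. \<forall>s\<ge>0. \<bar>s - t\<bar> < d \<longrightarrow> norm (f s) \<le> B)"
    using cadlag_local_bound[OF assms] by auto
  then obtain d where d: "\<And>t. t \<in> {0..T} \<Longrightarrow> d t > 0 \<and> (\<exists>B. \<forall>s\<ge>0. \<bar>s - t\<bar> < d t \<longrightarrow> norm (f s) \<le> B)"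
    by metis
  then obtain BB where BB: "\<And>t. t \<in> {0..T} \<Longrightarrow> d t > 0 \<and> (\<forall>s\<ge>0. \<bar>s - t\<bar> < d t \<longrightarrow> norm (f s) \<le> BB t)"
    by metis
  have cov: "{0..T} \<subseteq> \<Union>((\<lambda>t. ball t (d t)) ` {0..T})"
    using BB by force
  obtain S' where S': "S' \<subseteq> {0..T}" "finite S'" "{0..T} \<subseteq> \<Union>((\<lambda>t. ball t (d t)) ` S')"
    using compactE_image[OF compact_Icc, of "{0..T}" "\<lambda>t. ball t (d t)"] cov by auto
  show ?thesis
  proof (intro exI[of _ "\<Sum>t\<in>S'. \<bar>BB t\<bar>"] ballI)
    fix s assume s: "s \<in> {0..T}"
    then obtain t where t: "t \<in> S'" "s \<in> ball t (d t)" using S' by blast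
    then have "norm (f s) \<le> BB t" using BB[of t] S' s by (auto simp: dist_real_def abs_minus_commute)
    also have "\<dots> \<le> \<bar>BB t\<bar>" by simp
    also have "\<dots> \<le> (\<Sum>t\<in>S'. \<bar>BB t\<bar>)"
      using t S' by (intro member_le_sum) auto
    finally show "norm (f s) \<le> (\<Sum>t\<in>S'. \<bar>BB t\<bar>)" .
  qed
qed

lemma cadlag_measurable:
  fixes f :: "real \<Rightarrow> 'a::real_normed_vector"
  assumes "cadlag f"
  shows "(\<lambda>t. f (max 0 t)) \<in> borel_measurable borel"
proof (rule borel_measurable_continuous_countable_exceptions[OF cadlag_countable_disc[OF assms]])
  show "continuous_on (- {t. 0 < t \<and> \<not> isCont f t}) (\<lambda>t. f (max 0 t))"
  proof (intro continuous_at_imp_continuous_on ballI)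
    fix t assume t: "t \<in> - {t. 0 < t \<and> \<not> isCont f t}"
    show "isCont (\<lambda>t. f (max 0 t)) t"
    proof (cases "t > 0")
      case True
      then have "isCont f (max 0 t)" using t by auto
      moreover have "isCont (\<lambda>t::real. max 0 t) t" by (intro continuous_intros)
      ultimately show ?thesis using isCont_o2[where f="\<lambda>t::real. max 0 t" and g=f and a=t] by blast
    next
      case False
      have l: "((\<lambda>t. f (max 0 t)) \<longlongrightarrow> f (max 0 t)) (at_left t)"
      proof (rule Lim_transform_eventually[OF tendsto_const])
        show "\<forall>\<^sub>F x in at_left t. f (max 0 t) = f (max 0 x)"
          using False unfolding eventually_at_left_field
          by (intro exI[of _ "t - 1"]) auto
      qed
      have r: "((\<lambda>t. f (max 0 t)) \<longlongrightarrow> f (max 0 t)) (at_right t)"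
      proof (cases "t = 0")
        case True
        have r0: "(f \<longlongrightarrow> f 0) (at_right 0)" using cadlag_right[OF assms, of 0] by simp
        have "\<forall>\<^sub>F x in at_right 0. f x = f (max 0 x)"
          unfolding eventually_at_right_field by (intro exI[of _ 1]) auto
        then have "((\<lambda>x. f (max 0 x)) \<longlongrightarrow> f 0) (at_right 0)"
          by (rule Lim_transform_eventually[OF r0])
        then show ?thesis using True by simp
      next
        case False2: False
        show ?thesis
        proof (rule Lim_transform_eventually[OF tendsto_const])
          show "\<forall>\<^sub>F x in at_right t. f (max 0 t) = f (max 0 x)"
            using False False2 unfolding eventually_at_right_field
            by (intro exI[of _ "0"]) auto
        qed
      qed
      show ?thesis unfolding isCont_def by (rule filterlim_split_at[OF l r])
    qed
  qed
qed

lemma nn_small: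
  fixes d :: "nat \<Rightarrow> real \<Rightarrow> real"
  assumes lim: "(\<lambda>n. \<integral>\<^sup>+ T \<in> {0<..}. ennreal (exp (- T) * min (d n T) 1) \<partial>lborel) \<longlonglongrightarrow> 0"
    and T0: "T0 > 0" and e: "0 < e" "e \<le> 1"
  shows "eventually (\<lambda>n. \<exists>T\<in>{T0..T0+1}. d n T < e) sequentially"
proof -
  define c where "c = exp (- (T0 + 1)) * e"
  have c: "c > 0" unfolding c_def using e by simp
  have "eventually (\<lambda>n. (\<integral>\<^sup>+ T \<in> {0<..}. ennreal (exp (- T) * min (d n T) 1) \<partial>lborel) < ennreal c) sequentially"
    using lim c by (intro order_tendstoD(2)) auto
  then show ?thesis
  proof (rule eventually_mono)
    fix n assume n: "(\<integral>\<^sup>+ T \<in> {0<..}. ennreal (exp (- T) * min (d n T) 1) \<partial>lborel) < ennreal c"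
    show "\<exists>T\<in>{T0..T0+1}. d n T < e"
    proof (rule ccontr)
      assume "\<not> ?thesis"
      then have ge: "\<And>T. T \<in> {T0..T0+1} \<Longrightarrow> d n T \<ge> e" by force
      have "ennreal c = (\<integral>\<^sup>+ T. ennreal c * indicator {T0..T0+1} T \<partial>lborel)"
        by (subst nn_integral_cmult_indicator) auto
      also have "\<dots> \<le> (\<integral>\<^sup>+ T \<in> {0<..}. ennreal (exp (- T) * min (d n T) 1) \<partial>lborel)"
      proof (intro nn_integral_mono)
        fix T :: real
        show "ennreal c * indicator {T0..T0+1} T \<le> ennreal (exp (- T) * min (d n T) 1) * indicator {0<..} T"
        proof (cases "T \<in> {T0..T0+1}")
          case True
          then have "T > 0" using T0 by auto
          have "exp (- (T0 + 1)) \<le> exp (- T)" using True by simp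
          moreover have "e \<le> min (d n T) 1" using ge[OF True] e by simp
          ultimately have "c \<le> exp (- T) * min (d n T) 1" unfolding c_def
            using e by (intro mult_mono) auto
          then show ?thesis using True \<open>T > 0\<close> by (simp add: ennreal_leI)
        qed simp
      qed
      finally show False using n by simp
    qed
  qed
qed

lemma LambdaT_id: "T \<ge> 0 \<Longrightarrow> (\<lambda>t. t) \<in> LambdaT T"
  unfolding LambdaT_def by (auto simp: strict_mono_on_def bij_betw_def continuous_on_id)

lemma J1_extract:
  fixes xs :: "nat \<Rightarrow> real \<Rightarrow> 'a::real_normed_vector"
  assumes x: "cadlag x" and xs: "\<And>n. cadlag (xs n)" and lim: "(\<lambda>n. dJ1 (xs n) x) \<longlonglongrightarrow> 0"
    and T0: "T0 > 0" and e: "0 < e" "e \<le> 1"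
  shows "eventually (\<lambda>n. \<exists>T\<in>{T0..T0+1}. \<exists>lam\<in>LambdaT T. \<forall>t\<in>{0..T}.
            lam t \<in> {0..T} \<and> \<bar>lam t - t\<bar> < e \<and> norm (xs n (lam t) - x t) < e) sequentially"
proof -
  have "eventually (\<lambda>n. \<exists>T\<in>{T0..T0+1}. dJ1T T (xs n) x < e) sequentially"
    using lim T0 e unfolding dJ1_def by (intro nn_small) auto
  then show ?thesis
  proof (rule eventually_mono)
    fix n assume "\<exists>T\<in>{T0..T0+1}. dJ1T T (xs n) x < e"
    then obtain T where T: "T \<in> {T0..T0+1}" "dJ1T T (xs n) x < e" by blast
    let ?S = "{max (Sup ((\<lambda>t. \<bar>lam t - t\<bar>) ` {0..T}))
                           (Sup ((\<lambda>t. norm (xs n (lam t) - x t)) ` {0..T})) | lam. lam \<in> LambdaT T}"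
    have ne: "?S \<noteq> {}" using LambdaT_id[of T] T T0 by auto
    obtain m where "m \<in> ?S" "m < e" using cInf_lessD[OF ne] T(2) unfolding dJ1T_def by blast
    then obtain lam where lam: "lam \<in> LambdaT T"
      and lt: "max (Sup ((\<lambda>t. \<bar>lam t - t\<bar>) ` {0..T})) (Sup ((\<lambda>t. norm (xs n (lam t) - x t)) ` {0..T})) < e"
      by blast
    have into: "lam t \<in> {0..T}" if "t \<in> {0..T}" for t
      using lam that unfolding LambdaT_def bij_betw_def by auto
    obtain B1 where B1: "\<And>t. t\<in>{0..T} \<Longrightarrow> norm (xs n t) \<le> B1" using cadlag_bounded[OF xs] by blast
    obtain B2 where B2: "\<And>t. t\<in>{0..T} \<Longrightarrow> norm (x t) \<le> B2" using cadlag_bounded[OF x] by blast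
    have bdA: "bdd_above ((\<lambda>t. \<bar>lam t - t\<bar>) ` {0..T})"
      by (rule bdd_aboveI2[of _ _ T]) (use into in force)
    have bdB: "bdd_above ((\<lambda>t. norm (xs n (lam t) - x t)) ` {0..T})"
    proof (rule bdd_aboveI2[of _ _ "B1 + B2"])
      fix t assume t: "t \<in> {0..T}"
      have "norm (xs n (lam t) - x t) \<le> norm (xs n (lam t)) + norm (x t)" by (rule norm_triangle_ineq4)
      also have "\<dots> \<le> B1 + B2" using B1[OF into[OF t]] B2[OF t] by simp
      finally show "norm (xs n (lam t) - x t) \<le> B1 + B2" .
    qed
    have "\<forall>t\<in>{0..T}. lam t \<in> {0..T} \<and> \<bar>lam t - t\<bar> < e \<and> norm (xs n (lam t) - x t) < e"
    proof
      fix t assume t: "t \<in> {0..T}"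
      have "\<bar>lam t - t\<bar> \<le> Sup ((\<lambda>t. \<bar>lam t - t\<bar>) ` {0..T})" using t bdA by (intro cSup_upper) auto
      moreover have "norm (xs n (lam t) - x t) \<le> Sup ((\<lambda>t. norm (xs n (lam t) - x t)) ` {0..T})"
        using t bdB by (intro cSup_upper) auto
      ultimately show "lam t \<in> {0..T} \<and> \<bar>lam t - t\<bar> < e \<and> norm (xs n (lam t) - x t) < e"
        using lt into[OF t] by linarith
    qed
    then show "\<exists>T\<in>{T0..T0+1}. \<exists>lam\<in>LambdaT T. \<forall>t\<in>{0..T}.
            lam t \<in> {0..T} \<and> \<bar>lam t - t\<bar> < e \<and> norm (xs n (lam t) - x t) < e"
      using T lam by blast
  qed
qed

lemma Dup_cadlag: "f \<in> Dup \<Longrightarrow> cadlag f" unfolding Dup_def by auto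
lemma Dup_mono: "f \<in> Dup \<Longrightarrow> 0 \<le> a \<Longrightarrow> a \<le> b \<Longrightarrow> f a \<le> f b"
  unfolding Dup_def mono_on_def by auto
lemma Dup_nonneg: "f \<in> Dup \<Longrightarrow> 0 \<le> a \<Longrightarrow> 0 \<le> f a"
  unfolding Dup_def by auto

lemma Dup_lft_ge:
  assumes f: "f \<in> Dup" and a: "0 \<le> a" "a < s"
  shows "f a \<le> lft f s"
proof -
  have s: "s > 0" using a by simp
  show ?thesis
  proof (rule tendsto_lowerbound[OF cadlag_left[OF Dup_cadlag[OF f] s]])
    show "\<forall>\<^sub>F x in at_left s. f a \<le> f x"
      unfolding eventually_at_left_field using a
      by (intro exI[of _ a]) (auto intro: Dup_mono[OF f])
  qed simp
qed

lemma Dup_lft_le: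
  assumes f: "f \<in> Dup" and s: "0 \<le> s"
  shows "lft f s \<le> f s"
proof (cases "s = 0")
  case True then show ?thesis by (simp add: lft_def)
next
  case False
  then have s: "s > 0" using s by simp
  show ?thesis
  proof (rule tendsto_upperbound[OF cadlag_left[OF Dup_cadlag[OF f] s]])
    show "\<forall>\<^sub>F x in at_left s. f x \<le> f s"
      unfolding eventually_at_left_field using s
      by (intro exI[of _ 0]) (auto intro: Dup_mono[OF f])
  qed simp
qed

lemma Dup_lft_nonneg:
  assumes f: "f \<in> Dup" and s: "0 \<le> s"
  shows "f 0 \<le> lft f s"
proof (cases "s = 0")
  case True then show ?thesis by (simp add: lft_def)
next
  case False
  then show ?thesis using Dup_lft_ge[OF f, of 0 s] s by simp
qed

lemma PiT_nonempty:
  assumes f: "f \<in> Dup" and T: "T > 0"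
  shows "PiT f T \<noteq> {}"
proof -
  define P0 where "P0 = f 0"
  define P1 where "P1 = T + f T"
  have P01: "P1 - P0 \<ge> T" unfolding P0_def P1_def using Dup_mono[OF f, of 0 T] T by simp
  define A where "A p = {s\<in>{0..T}. p \<le> s + f s}" for p
  define sig where "sig p = Inf (A p)" for p
  have Ane: "A p \<noteq> {}" if "p \<le> P1" for p using that T unfolding A_def P1_def by auto
  have Abd: "bdd_below (A p)" for p unfolding A_def by (rule bdd_belowI[of _ 0]) auto
  have sig_ge: "sig p \<ge> 0" if "p \<le> P1" for p
    unfolding sig_def by (rule cInf_greatest[OF Ane[OF that]]) (auto simp: A_def)
  have sig_le: "sig p \<le> s" if "s \<in> A p" for p s
    unfolding sig_def by (rule cInf_lower[OF that Abd])
  have sig_leT: "sig p \<le> T" if "p \<le> P1" for p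
    using sig_le[of T p] that T unfolding A_def P1_def by auto
  have below: "s + f s < p" if "p \<le> P1" "0 \<le> s" "s < sig p" for p s
  proof (rule ccontr)
    assume "\<not> s + f s < p"
    then have "s \<in> A p" using that sig_leT[OF that(1)] unfolding A_def by auto
    then show False using sig_le that by force
  qed
  have above: "p \<le> sig p + f (sig p)" if hp: "p \<le> P1" for p
  proof (cases "sig p = T")
    case True then show ?thesis using that unfolding P1_def by simp
  next
    case False
    then have lt: "sig p < T" using sig_leT[OF that] by simp
    have ev: "\<forall>\<^sub>F s in at_right (sig p). p \<le> s + f s"
      unfolding eventually_at_right_field
    proof (intro exI[of _ T] conjI allI impI)
      fix s assume s: "sig p < s" "s < T"
      obtain s' where s': "s' \<in> A p" "s' < s" using cInf_lessD[OF Ane[OF hp]] s(1) unfolding sig_def by blast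
      then have "p \<le> s' + f s'" "0 \<le> s'" unfolding A_def by auto
      moreover have "f s' \<le> f s" using s' by (intro Dup_mono[OF f]) (auto simp: A_def)
      ultimately show "p \<le> s + f s" using s' by linarith
    qed (rule lt)
    have "((\<lambda>s. s + f s) \<longlongrightarrow> sig p + f (sig p)) (at_right (sig p))"
      by (intro tendsto_intros cadlag_right[OF Dup_cadlag[OF f] sig_ge[OF that]])
    then show ?thesis by (rule tendsto_lowerbound[OF _ ev]) simp
  qed
  have lftle: "sig p + lft f (sig p) \<le> p" if hp0: "P0 \<le> p" and hp1: "p \<le> P1" for p
  proof (cases "sig p = 0")
    case True then show ?thesis using hp0 by (simp add: lft_def P0_def)
  next
    case False
    then have sp: "sig p > 0" using sig_ge[OF hp1] by simp
    have ev: "\<forall>\<^sub>F s in at_left (sig p). s + f s \<le> p"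
      unfolding eventually_at_left_field
    proof (intro exI[of _ 0] conjI allI impI)
      fix y :: real assume "0 < y" "y < sig p"
      then show "y + f y \<le> p" using below[OF hp1, of y] by simp
    qed (rule sp)
    have "((\<lambda>s. s + f s) \<longlongrightarrow> sig p + lft f (sig p)) (at_left (sig p))"
      by (intro tendsto_intros cadlag_left[OF Dup_cadlag[OF f] sp])
    then show ?thesis by (rule tendsto_upperbound[OF _ ev]) simp
  qed
  have sig_mono: "sig p \<le> sig p'" if "p \<le> p'" "p' \<le> P1" for p p'
    unfolding sig_def
    by (rule cInf_superset_mono[OF Ane[OF that(2)] Abd]) (use that in \<open>auto simp: A_def\<close>)
  have sig_lip: "sig p' - sig p \<le> p' - p" if "P0 \<le> p" "p \<le> p'" "p' \<le> P1" for p p'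
  proof (rule ccontr)
    assume "\<not> ?thesis"
    then have gt: "sig p' > sig p + (p' - p)" by simp
    define s where "s = ((sig p + (p' - p)) + sig p') / 2"
    have s: "sig p + (p' - p) < s" "s < sig p'" using gt unfolding s_def by auto
    have sp0: "sig p \<ge> 0" using sig_ge that by simp
    have "s + f s < p'" using below[OF that(3), of s] s sp0 that by simp
    moreover have "f (sig p) \<le> f s" using s sp0 that by (intro Dup_mono[OF f]) auto
    moreover have "p \<le> sig p + f (sig p)" using above that by simp
    ultimately show False using s by linarith
  qed
  have inv: "sig (s + z) = s" if "s \<in> {0..T}" "lft f s \<le> z" "z \<le> f s" for s z
  proof -
    have p1: "s + z \<le> P1" using that Dup_mono[OF f, of s T] unfolding P1_def by auto
    have "s \<in> A (s + z)" using that unfolding A_def by auto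
    then have le: "sig (s + z) \<le> s" by (rule sig_le)
    show ?thesis
    proof (rule ccontr)
      assume "sig (s + z) \<noteq> s"
      then have lt: "sig (s + z) < s" using le by simp
      have "f (sig (s + z)) \<le> lft f s" using lt sig_ge[OF p1] by (intro Dup_lft_ge[OF f]) auto
      then show False using above[OF p1] lt that by linarith
    qed
  qed
  define pp where "pp a = P0 + a * (P1 - P0)" for a :: real
  define r where "r a = sig (pp a)" for a
  define u where "u a = pp a - r a" for a
  have pp01: "P0 \<le> pp a \<and> pp a \<le> P1" if "a \<in> {0..1}" for a
  proof -
    have "0 \<le> a * (P1 - P0)" using that P01 T by simp
    moreover have "a * (P1 - P0) \<le> 1 * (P1 - P0)" using that P01 T by (intro mult_right_mono) auto
    ultimately show ?thesis unfolding pp_def by simp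
  qed
  have lip: "(P1 - P0)-lipschitz_on {0..1} r"
  proof (rule lipschitz_onI)
    fix a b :: real assume ab: "a \<in> {0..1}" "b \<in> {0..1}"
    have key: "\<bar>r a - r b\<bar> \<le> (P1 - P0) * \<bar>a - b\<bar>" if "a \<in> {0..1}" "b \<in> {0..1}" "a \<le> b" for a b
    proof -
      have "pp a \<le> pp b" using that P01 T unfolding pp_def by (intro add_left_mono mult_right_mono) auto
      then have "r b - r a \<le> pp b - pp a" "r a \<le> r b"
        using sig_lip[of "pp a" "pp b"] sig_mono[of "pp a" "pp b"] pp01 that unfolding r_def by auto
      moreover have "pp b - pp a = (P1 - P0) * (b - a)" unfolding pp_def by (simp add: algebra_simps)
      ultimately show ?thesis using that by simp
    qed
    show "dist (r a) (r b) \<le> (P1 - P0) * dist a b"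
      using key[of a b] key[of b a] ab by (cases "a \<le> b") (auto simp: dist_real_def abs_minus_commute)
  next
    show "0 \<le> P1 - P0" using P01 T by simp
  qed
  have rc: "continuous_on {0..1} r" by (rule lipschitz_on_continuous_on[OF lip])
  have uc: "continuous_on {0..1} u" unfolding u_def pp_def
    by (intro continuous_intros rc)
  have inG: "(r a, u a) \<in> GammaT f T" if "a \<in> {0..1}" for a
  proof -
    have "r a \<in> {0..T}" using sig_ge sig_leT pp01[OF that] unfolding r_def by auto
    moreover have "lft f (r a) \<le> u a" "u a \<le> f (r a)"
      using lftle[OF pp01[OF that, THEN conjunct1] pp01[OF that, THEN conjunct2]] above[OF pp01[OF that, THEN conjunct2]] unfolding u_def r_def by auto
    ultimately show ?thesis unfolding GammaT_def by (auto simp: closed_segment_eq_real_ivl)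
  qed
  have surj: "(s, z) \<in> (\<lambda>t. (r t, u t)) ` {0..1}" if "(s, z) \<in> GammaT f T" for s z
  proof -
    have s: "s \<in> {0..T}" and z: "z \<in> closed_segment (lft f s) (f s)" using that unfolding GammaT_def by auto
    have lf: "lft f s \<le> f s" using Dup_lft_le[OF f] s by auto
    then have z2: "lft f s \<le> z" "z \<le> f s" using z by (auto simp: closed_segment_eq_real_ivl)
    define a where "a = (s + z - P0) / (P1 - P0)"
    have pos: "P1 - P0 > 0" using P01 T by simp
    have ppa: "pp a = s + z" unfolding a_def pp_def using pos by simp
    have "P0 \<le> s + z" using Dup_lft_nonneg[OF f, of s] s z2 unfolding P0_def by auto
    moreover have "s + z \<le> P1" using z2 s Dup_mono[OF f, of s T] unfolding P1_def by auto
    ultimately have a01: "a \<in> {0..1}" unfolding a_def using pos by (auto simp: field_simps)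
    have "r a = s" unfolding r_def ppa by (rule inv[OF s z2])
    moreover then have "u a = z" unfolding u_def ppa by simp
    ultimately show ?thesis using a01 by force
  qed
  have r0: "r 0 = 0" unfolding r_def pp_def using inv[of 0 "f 0"] T by (simp add: lft_def P0_def)
  have r1: "r 1 = T" unfolding r_def pp_def using inv[of T "f T"] T Dup_lft_le[OF f, of T]
    by (simp add: P1_def)
  have ord: "graph_le f (r a, u a) (r b, u b)" if "0 \<le> a" "a \<le> b" "b \<le> 1" for a b
  proof -
    have ab: "a \<in> {0..1}" "b \<in> {0..1}" using that by auto
    have ppab: "pp a \<le> pp b" using that P01 T unfolding pp_def by (intro add_left_mono mult_right_mono) auto
    then have rab: "r a \<le> r b" using sig_mono pp01[OF ab(2)] unfolding r_def by auto
    show ?thesis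
    proof (cases "r a = r b")
      case True
      have "lft f (r a) \<le> u a" using inG[OF ab(1)] unfolding GammaT_def
        using Dup_lft_le[OF f, of "r a"] by (auto simp: closed_segment_eq_real_ivl)
      moreover have "u a \<le> u b" using ppab True unfolding u_def by simp
      ultimately show ?thesis using True unfolding graph_le_def by auto
    next
      case False
      then show ?thesis using rab unfolding graph_le_def by auto
    qed
  qed
  have "(r, u) \<in> PiT f T"
    unfolding PiT_def using rc uc inG surj r0 r1 ord by auto
  then show ?thesis by blast
qed

lemma cont_sup_bdd:
  fixes r1 r2 :: "real \<Rightarrow> real"
  assumes "continuous_on {0..1} r1" "continuous_on {0..1} r2"
  shows "bdd_above ((\<lambda>t. \<bar>r1 t - r2 t\<bar>) ` {0..1})"
proof -
  have "continuous_on {0..1} (\<lambda>t. \<bar>r1 t - r2 t\<bar>)" by (intro continuous_intros assms)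
  then have "compact ((\<lambda>t. \<bar>r1 t - r2 t\<bar>) ` {0..1})" by (intro compact_continuous_image) auto
  then show ?thesis by (intro bounded_imp_bdd_above compact_imp_bounded)
qed

lemma M1_extract:
  assumes y: "y \<in> Dup" and ys: "\<And>n. ys n \<in> Dup" and lim: "(\<lambda>n. dM1 (ys n) y) \<longlonglongrightarrow> 0"
    and T0: "T0 > 0" and e: "0 < e" "e \<le> 1"
  shows "eventually (\<lambda>n. \<exists>S\<in>{T0..T0+1}. \<exists>r1 u1 r2 u2. (r1, u1) \<in> PiT (ys n) S \<and> (r2, u2) \<in> PiT y S \<and>
            (\<forall>a\<in>{0..1}. \<bar>r1 a - r2 a\<bar> < e \<and> \<bar>u1 a - u2 a\<bar> < e)) sequentially"
proof -
  have "eventually (\<lambda>n. \<exists>S\<in>{T0..T0+1}. dM1T S (ys n) y < e) sequentially"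
    using lim T0 e unfolding dM1_def by (intro nn_small) auto
  then show ?thesis
  proof (rule eventually_mono)
    fix n assume "\<exists>S\<in>{T0..T0+1}. dM1T S (ys n) y < e"
    then obtain S where S: "S \<in> {T0..T0+1}" "dM1T S (ys n) y < e" by blast
    let ?S = "{max (Sup ((\<lambda>t. \<bar>r1 t - r2 t\<bar>) ` {0..1}))
                           (Sup ((\<lambda>t. \<bar>u1 t - u2 t\<bar>) ` {0..1})) | r1 u1 r2 u2.
                        (r1, u1) \<in> PiT (ys n) S \<and> (r2, u2) \<in> PiT y S}"
    have Sp: "S > 0" using S T0 by auto
    obtain r1 u1 where p1: "(r1, u1) \<in> PiT (ys n) S" using PiT_nonempty[OF ys[of n] Sp] by auto
    obtain r2 u2 where p2: "(r2, u2) \<in> PiT y S" using PiT_nonempty[OF y Sp] by auto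
    have ne: "?S \<noteq> {}" using p1 p2 by blast
    obtain m where "m \<in> ?S" "m < e" using cInf_lessD[OF ne] S(2) unfolding dM1T_def by blast
    then obtain r1 u1 r2 u2 where p1: "(r1, u1) \<in> PiT (ys n) S" and p2: "(r2, u2) \<in> PiT y S"
      and lt: "max (Sup ((\<lambda>t. \<bar>r1 t - r2 t\<bar>) ` {0..1})) (Sup ((\<lambda>t. \<bar>u1 t - u2 t\<bar>) ` {0..1})) < e"
      by blast
    have c: "continuous_on {0..1} r1" "continuous_on {0..1} u1" "continuous_on {0..1} r2" "continuous_on {0..1} u2"
      using p1 p2 unfolding PiT_def by auto
    have "\<forall>a\<in>{0..1}. \<bar>r1 a - r2 a\<bar> < e \<and> \<bar>u1 a - u2 a\<bar> < e"
    proof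
      fix a :: real assume a: "a \<in> {0..1}"
      have "\<bar>r1 a - r2 a\<bar> \<le> Sup ((\<lambda>t. \<bar>r1 t - r2 t\<bar>) ` {0..1})"
        using a cont_sup_bdd[OF c(1,3)] by (intro cSup_upper) auto
      moreover have "\<bar>u1 a - u2 a\<bar> \<le> Sup ((\<lambda>t. \<bar>u1 t - u2 t\<bar>) ` {0..1})"
        using a cont_sup_bdd[OF c(2,4)] by (intro cSup_upper) auto
      ultimately show "\<bar>r1 a - r2 a\<bar> < e \<and> \<bar>u1 a - u2 a\<bar> < e" using lt by linarith
    qed
    then show "\<exists>S\<in>{T0..T0+1}. \<exists>r1 u1 r2 u2. (r1, u1) \<in> PiT (ys n) S \<and> (r2, u2) \<in> PiT y S \<and>
            (\<forall>a\<in>{0..1}. \<bar>r1 a - r2 a\<bar> < e \<and> \<bar>u1 a - u2 a\<bar> < e)"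
      using S p1 p2 by blast
  qed
qed

lemma M1_point:
  assumes g: "g \<in> Dup" and p1: "(r1, u1) \<in> PiT g S" and p2: "(r2, u2) \<in> PiT y S"
    and close: "\<forall>a\<in>{0..1}. \<bar>r1 a - r2 a\<bar> < e \<and> \<bar>u1 a - u2 a\<bar> < e"
    and t: "t \<in> {0..S}"
  shows "\<exists>s' z. s' \<in> {0..S} \<and> \<bar>s' - t\<bar> < e \<and> z \<in> closed_segment (lft y s') (y s') \<and> \<bar>g t - z\<bar> < e"
proof -
  have "(t, g t) \<in> GammaT g S" using t unfolding GammaT_def by auto
  moreover have "(\<lambda>a. (r1 a, u1 a)) ` {0..1} = GammaT g S" using p1 unfolding PiT_def by auto
  ultimately obtain a where a: "a \<in> {0..1}" "(t, g t) = (r1 a, u1 a)" by blast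
  have "(\<lambda>a. (r2 a, u2 a)) ` {0..1} = GammaT y S" using p2 unfolding PiT_def by auto
  then have "(r2 a, u2 a) \<in> GammaT y S" using a(1) by blast
  then have G2: "r2 a \<in> {0..S}" "u2 a \<in> closed_segment (lft y (r2 a)) (y (r2 a))"
    unfolding GammaT_def by auto
  have "\<bar>r2 a - t\<bar> < e" "\<bar>g t - u2 a\<bar> < e" using close a by (auto simp: abs_minus_commute)
  then show ?thesis using G2 by blast
qed

lemma lft_near:
  assumes y: "y \<in> Dup" and near: "\<And>v. 0 \<le> v \<Longrightarrow> \<bar>v - t\<bar> < d \<Longrightarrow> \<bar>y v - c\<bar> \<le> eta"
    and s: "0 \<le> s" "\<bar>s - t\<bar> < d"
  shows "\<bar>lft y s - c\<bar> \<le> eta"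
proof (cases "s = 0")
  case True then show ?thesis using near[of 0] s by (simp add: lft_def)
next
  case False
  then have sp: "s > 0" using s by simp
  have ev: "\<forall>\<^sub>F v in at_left s. \<bar>y v - c\<bar> \<le> eta"
    unfolding eventually_at_left_field
  proof (intro exI[of _ "max 0 (s - (d - \<bar>s - t\<bar>))"] conjI allI impI)
    show "max 0 (s - (d - \<bar>s - t\<bar>)) < s" using sp s by simp
    fix v assume "max 0 (s - (d - \<bar>s - t\<bar>)) < v" "v < s"
    then show "\<bar>y v - c\<bar> \<le> eta" using s by (intro near) auto
  qed
  have l: "(y \<longlongrightarrow> lft y s) (at_left s)" by (rule cadlag_left[OF Dup_cadlag[OF y] sp])
  have "lft y s \<le> c + eta"
    by (rule tendsto_upperbound[OF l]) (use ev in \<open>auto elim: eventually_mono\<close>)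
  moreover have "c - eta \<le> lft y s"
    by (rule tendsto_lowerbound[OF l]) (use ev in \<open>auto elim: eventually_mono\<close>)
  ultimately show ?thesis by linarith
qed

lemma LambdaT_surj:
  assumes "lam \<in> LambdaT T" "w \<in> {0..T}"
  shows "\<exists>v\<in>{0..T}. lam v = w"
proof -
  have "w \<in> lam ` {0..T}" using assms unfolding LambdaT_def bij_betw_def by auto
  then show ?thesis by blast
qed

lemma seg_near:
  fixes a b c z :: real
  assumes "z \<in> closed_segment a b" "\<bar>a - c\<bar> \<le> h" "\<bar>b - c\<bar> \<le> h"
  shows "\<bar>z - c\<bar> \<le> h"
  using assms by (auto simp: closed_segment_eq_real_ivl split: if_splits)

lemma seg_le:
  fixes a b z :: real
  assumes "z \<in> closed_segment a b" "a \<le> b"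
  shows "z \<le> b" "a \<le> z"
  using assms by (auto simp: closed_segment_eq_real_ivl)

lemma main_T:
  fixes x :: "real \<Rightarrow> 'a::{real_normed_vector, second_countable_topology, banach}" and y :: "real \<Rightarrow> real"
    and xs :: "nat \<Rightarrow> real \<Rightarrow> 'a" and ys :: "nat \<Rightarrow> real \<Rightarrow> real"
  assumes x: "cadlag x" and y: "y \<in> Dup"
    and xy: "continuous_on {0..} x \<or> y \<in> Dupup"
    and xs: "\<And>n. cadlag (xs n)" and ys: "\<And>n. ys n \<in> Dup"
    and limx: "(\<lambda>n. dJ1 (xs n) x) \<longlonglongrightarrow> 0"
    and limy: "(\<lambda>n. dM1 (ys n) y) \<longlonglongrightarrow> 0"
    and T: "T > 0"
  shows "(\<lambda>n. LBINT t:{0..T}. norm ((xs n \<circ> ys n) t - (x \<circ> y) t)) \<longlonglongrightarrow> 0"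
proof -
  define M where "M = y (T + 1) + 2"
  have M: "M > 0" using Dup_nonneg[OF y, of "T+1"] T unfolding M_def by simp
  define PJ where "PJ = (\<lambda>e n. \<exists>T'\<in>{M..M+1}. \<exists>lam\<in>LambdaT T'. \<forall>t\<in>{0..T'}.
            lam t \<in> {0..T'} \<and> \<bar>lam t - t\<bar> < e \<and> norm (xs n (lam t) - x t) < e)"
  define PM where "PM = (\<lambda>e n. \<exists>S\<in>{T..T+1}. \<exists>r1 u1 r2 u2. (r1, u1) \<in> PiT (ys n) S \<and> (r2, u2) \<in> PiT y S \<and>
            (\<forall>a\<in>{0..1}. \<bar>r1 a - r2 a\<bar> < e \<and> \<bar>u1 a - u2 a\<bar> < e))"
  have J: "eventually (PJ e) sequentially" if "0 < e" "e \<le> 1" for e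
    unfolding PJ_def using J1_extract[OF x xs limx M that] .
  have MM: "eventually (PM e) sequentially" if "0 < e" "e \<le> 1" for e
    unfolding PM_def using M1_extract[OF y ys limy T that] .
  have step: "\<exists>v\<in>{0..T'}. \<exists>s'\<in>{0..S}. \<exists>z. \<bar>s' - t\<bar> < e2 \<and> z \<in> closed_segment (lft y s') (y s')
        \<and> \<bar>ys n t - z\<bar> < e2 \<and> \<bar>v - ys n t\<bar> < e1 \<and> norm (xs n (ys n t) - x v) < e1
        \<and> 0 \<le> ys n t \<and> ys n t < M"
    if T': "T' \<in> {M..M+1}" and lam: "lam \<in> LambdaT T'"
      and lamc: "\<forall>v\<in>{0..T'}. lam v \<in> {0..T'} \<and> \<bar>lam v - v\<bar> < e1 \<and> norm (xs n (lam v) - x v) < e1"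
      and S: "S \<in> {T..T+1}" and p1: "(r1, u1) \<in> PiT (ys n) S" and p2: "(r2, u2) \<in> PiT y S"
      and close: "\<forall>a\<in>{0..1}. \<bar>r1 a - r2 a\<bar> < e2 \<and> \<bar>u1 a - u2 a\<bar> < e2"
      and t: "t \<in> {0..T}" and e2: "e2 \<le> 1"
    for T' lam e1 n S r1 u1 r2 u2 e2 t
  proof -
    have tS: "t \<in> {0..S}" using t S by auto
    obtain s' z where sz: "s' \<in> {0..S}" "\<bar>s' - t\<bar> < e2" "z \<in> closed_segment (lft y s') (y s')" "\<bar>ys n t - z\<bar> < e2"
      using M1_point[OF ys p1 p2 close tS] by blast
    have "z \<le> y s'" using seg_le[OF sz(3) Dup_lft_le[OF y]] sz(1) by auto
    also have "y s' \<le> y (T + 1)" using sz(1) S by (intro Dup_mono[OF y]) auto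
    finally have "ys n t < M" using sz(4) e2 unfolding M_def by linarith
    moreover have g0: "0 \<le> ys n t" using Dup_nonneg[OF ys] t by auto
    ultimately have "ys n t \<in> {0..T'}" using T' by auto
    then obtain v where v: "v \<in> {0..T'}" "lam v = ys n t" using LambdaT_surj[OF lam] by blast
    have lv: "\<bar>lam v - v\<bar> < e1 \<and> norm (xs n (lam v) - x v) < e1" using lamc v(1) by blast
    have "\<bar>v - ys n t\<bar> < e1" "norm (xs n (ys n t) - x v) < e1" using lv v(2) by (auto simp: abs_minus_commute)
    then show ?thesis using v(1) sz \<open>ys n t < M\<close> g0 by blast
  qed
  obtain Bx where Bx: "\<And>v. v \<in> {0..M+1} \<Longrightarrow> norm (x v) \<le> Bx" using cadlag_bounded[OF x] by blast
  obtain N where N: "\<And>n. n \<ge> N \<Longrightarrow> PJ 1 n \<and> PM 1 n"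
    using eventually_conj[OF J[of 1] MM[of 1]] unfolding eventually_sequentially by auto
  have bound: "norm (xs n (ys n t) - x (y t)) \<le> 2 * Bx + 1" if n: "n \<ge> N" and t: "t \<in> {0..T}" for n t
  proof -
    obtain T' lam S r1 u1 r2 u2 where T': "T' \<in> {M..M+1}" and lam: "lam \<in> LambdaT T'"
      and lamc: "\<forall>v\<in>{0..T'}. lam v \<in> {0..T'} \<and> \<bar>lam v - v\<bar> < 1 \<and> norm (xs n (lam v) - x v) < 1"
      and S: "S \<in> {T..T+1}" and p1: "(r1, u1) \<in> PiT (ys n) S" and p2: "(r2, u2) \<in> PiT y S"
      and close: "\<forall>a\<in>{0..1}. \<bar>r1 a - r2 a\<bar> < 1 \<and> \<bar>u1 a - u2 a\<bar> < 1"
      using N[OF n] unfolding PJ_def PM_def by blast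
    obtain v where v: "v \<in> {0..T'}" "norm (xs n (ys n t) - x v) < 1"
      using step[OF T' lam lamc S p1 p2 close t] by blast
    have "norm (x v) \<le> Bx" using v(1) T' by (intro Bx) auto
    moreover have "y t \<le> y (T + 1)" using t by (intro Dup_mono[OF y]) auto
    then have "norm (x (y t)) \<le> Bx" using Dup_nonneg[OF y, of t] t M_def by (intro Bx) auto
    moreover have "norm (xs n (ys n t) - x (y t)) \<le> norm (xs n (ys n t) - x v) + norm (x v) + norm (x (y t))"
    proof -
      have "norm (xs n (ys n t) - x (y t)) \<le> norm (xs n (ys n t) - x v) + norm (x v - x (y t))"
        using norm_triangle_ineq[of "xs n (ys n t) - x v" "x v - x (y t)"] by simp
      moreover have "norm (x v - x (y t)) \<le> norm (x v) + norm (x (y t))" by (rule norm_triangle_ineq4)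
      ultimately show ?thesis by linarith
    qed
    ultimately show ?thesis using v(2) by linarith
  qed
  have conv: "(\<lambda>n. norm (xs n (ys n t) - x (y t))) \<longlonglongrightarrow> 0"
    if t: "t \<in> {0<..T}" and cy: "isCont y t" and cx: "continuous (at (y t) within {0..}) x" for t
  proof (rule tendstoI)
    fix eta :: real assume eta: "eta > 0"
    obtain dx where dx: "dx > 0" "\<And>v. v \<in> {0..} \<Longrightarrow> dist v (y t) < dx \<Longrightarrow> dist (x v) (x (y t)) < eta / 2"
      using cx eta unfolding continuous_within_eps_delta by (metis half_gt_zero)
    obtain dy where dy: "dy > 0" "\<And>v. dist v t < dy \<Longrightarrow> dist (y v) (y t) < dx / 3"
      using cy dx unfolding continuous_at_eps_delta by (metis divide_pos_pos zero_less_numeral)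
    have near: "\<bar>y v - y t\<bar> \<le> dx / 3" if "0 \<le> v" "\<bar>v - t\<bar> < dy" for v
      using dy(2)[of v] that by (simp add: dist_real_def)
    define e1 where "e1 = min 1 (min (eta / 2) (dx / 3))"
    define e2 where "e2 = min 1 (min dy (dx / 3))"
    have e1: "0 < e1" "e1 \<le> 1" unfolding e1_def using eta dx by auto
    have e2: "0 < e2" "e2 \<le> 1" unfolding e2_def using dy dx by auto
    show "\<forall>\<^sub>F n in sequentially. dist (norm (xs n (ys n t) - x (y t))) 0 < eta"
      using eventually_conj[OF J[OF e1] MM[OF e2]]
    proof (rule eventually_mono)
      fix n assume "PJ e1 n \<and> PM e2 n"
      then obtain T' lam S r1 u1 r2 u2 where T': "T' \<in> {M..M+1}" and lam: "lam \<in> LambdaT T'"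
        and lamc: "\<forall>v\<in>{0..T'}. lam v \<in> {0..T'} \<and> \<bar>lam v - v\<bar> < e1 \<and> norm (xs n (lam v) - x v) < e1"
        and S: "S \<in> {T..T+1}" and p1: "(r1, u1) \<in> PiT (ys n) S" and p2: "(r2, u2) \<in> PiT y S"
        and close: "\<forall>a\<in>{0..1}. \<bar>r1 a - r2 a\<bar> < e2 \<and> \<bar>u1 a - u2 a\<bar> < e2"
        unfolding PJ_def PM_def by blast
      have t': "t \<in> {0..T}" using t by auto
      obtain v s' z where v: "v \<in> {0..T'}" "s' \<in> {0..S}" "\<bar>s' - t\<bar> < e2" "z \<in> closed_segment (lft y s') (y s')"
        "\<bar>ys n t - z\<bar> < e2" "\<bar>v - ys n t\<bar> < e1" "norm (xs n (ys n t) - x v) < e1"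
        using step[OF T' lam lamc S p1 p2 close t' e2(2)] by blast
      have s'd: "\<bar>s' - t\<bar> < dy" using v(3) unfolding e2_def by linarith
      have "\<bar>lft y s' - y t\<bar> \<le> dx / 3" using v(2) s'd by (intro lft_near[OF y near]) auto
      moreover have "\<bar>y s' - y t\<bar> \<le> dx / 3" using v(2) s'd by (intro near) auto
      ultimately have "\<bar>z - y t\<bar> \<le> dx / 3" by (rule seg_near[OF v(4)])
      then have "\<bar>v - y t\<bar> < dx" using v(5,6) unfolding e1_def e2_def by linarith
      then have "dist (x v) (x (y t)) < eta / 2" using v(1) by (intro dx(2)) (auto simp: dist_real_def)
      then have "norm (xs n (ys n t) - x (y t)) < e1 + eta / 2"
        using v(7) norm_triangle_lt[of "xs n (ys n t) - x v" "x v - x (y t)"] by (simp add: dist_norm)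
      then show "dist (norm (xs n (ys n t) - x (y t))) 0 < eta" unfolding e1_def by simp
    qed
  qed
  define F where "F n t = norm (xs n (max 0 (ys n (max 0 t))) - x (max 0 (y (max 0 t))))" for n t
  have Feq: "F n t = norm ((xs n \<circ> ys n) t - (x \<circ> y) t)" if "t \<in> {0..T}" for n t
    using that Dup_nonneg[OF ys, of t n] Dup_nonneg[OF y, of t] unfolding F_def by simp
  have Fmeas: "F n \<in> borel_measurable borel" for n
  proof -
    have m1: "(\<lambda>t. ys n (max 0 t)) \<in> borel_measurable borel"
      by (rule borel_measurable_mono) (auto simp: mono_def intro!: Dup_mono[OF ys])
    have m2: "(\<lambda>t. y (max 0 t)) \<in> borel_measurable borel"
      by (rule borel_measurable_mono) (auto simp: mono_def intro!: Dup_mono[OF y])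
    have m3: "(\<lambda>t. xs n (max 0 (ys n (max 0 t)))) \<in> borel_measurable borel"
      by (rule measurable_compose[OF m1 cadlag_measurable[OF xs]])
    have m4: "(\<lambda>t. x (max 0 (y (max 0 t)))) \<in> borel_measurable borel"
      by (rule measurable_compose[OF m2 cadlag_measurable[OF x]])
    have "(\<lambda>t. xs n (max 0 (ys n (max 0 t))) - x (max 0 (y (max 0 t)))) \<in> borel_measurable borel"
      by (intro borel_measurable_diff m3 m4)
    from measurable_compose[OF this borel_measurable_norm] show ?thesis unfolding F_def .
  qed
  define C where "C = {t. 0 < t \<and> \<not> isCont y t}"
  define D where "D = {t \<in> {0..T}. \<not> continuous (at (y t) within {0..}) x}"
  have cC: "countable C" unfolding C_def by (rule cadlag_countable_disc[OF Dup_cadlag[OF y]])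
  have cD: "countable D"
    using xy
  proof
    assume "continuous_on {0..} x"
    then have "D = {}" unfolding D_def using Dup_nonneg[OF y]
      by (auto simp: continuous_on_eq_continuous_within)
    then show ?thesis by simp
  next
    assume yy: "y \<in> Dupup"
    then have sm: "strict_mono_on {0..} y" unfolding Dupup_def by auto
    define Cx where "Cx = {u. 0 < u \<and> \<not> isCont x u}"
    have cCx: "countable Cx" unfolding Cx_def by (rule cadlag_countable_disc[OF x])
    define D' where "D' = {t \<in> {0..}. y t \<in> Cx}"
    have "D \<subseteq> {0} \<union> D'"
    proof
      fix t assume tD: "t \<in> D"
      show "t \<in> {0} \<union> D'"
      proof (cases "t = 0")
        case False
        then have tp: "t > 0" using tD unfolding D_def by auto
        have "y 0 < y t" using sm tp by (auto simp: strict_mono_on_def)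
        then have yp: "y t > 0" using Dup_nonneg[OF y, of 0] by simp
        have "\<not> isCont x (y t)" using tD unfolding D_def by (auto intro: continuous_at_imp_continuous_within)
        then show ?thesis using yp tp unfolding D'_def Cx_def by auto
      qed simp
    qed
    moreover have "countable D'"
    proof (rule countable_image_inj_on)
      show "countable (y ` D')" by (rule countable_subset[OF _ cCx]) (auto simp: D'_def)
      show "inj_on y D'" by (rule inj_on_subset[OF strict_mono_on_imp_inj_on[OF sm]]) (auto simp: D'_def)
    qed
    ultimately show ?thesis by (meson countable_Un countable_finite countable_subset finite.emptyI finite_insert)
  qed
  define E where "E = {0} \<union> C \<union> D"
  have cE: "countable E" unfolding E_def using cC cD by simp
  have AEE: "AE t in lborel. t \<notin> E" by (rule AE_not_in[OF countable_imp_null_set_lborel[OF cE]])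
  define s where "s i t = indicator {0..T} t *\<^sub>R F (i + N) t" for i t
  have lim: "AE t in lborel. (\<lambda>i. s i t) \<longlonglongrightarrow> 0"
    using AEE
  proof (rule eventually_mono)
    fix t assume tE: "t \<notin> E"
    show "(\<lambda>i. s i t) \<longlonglongrightarrow> 0"
    proof (cases "t \<in> {0..T}")
      case True
      then have t: "t \<in> {0<..T}" "isCont y t" "continuous (at (y t) within {0..}) x"
        using tE unfolding E_def C_def D_def by auto
      have "(\<lambda>n. F n t) \<longlonglongrightarrow> 0" using conv[OF t] Feq[OF True] by simp
      then have "(\<lambda>i. F (i + N) t) \<longlonglongrightarrow> 0" by (rule LIMSEQ_ignore_initial_segment)
      then show ?thesis using True unfolding s_def by simp
    next
      case False
      then show ?thesis unfolding s_def by simp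
    qed
  qed
  have smeas: "s i \<in> borel_measurable lborel" for i
    unfolding s_def using Fmeas by simp
  have wint: "integrable lborel (\<lambda>t. (2 * Bx + 1) * indicator {0..T} t)"
    by (rule borel_integrable_atLeastAtMost) simp
  have sbound: "AE t in lborel. norm (s i t) \<le> (2 * Bx + 1) * indicator {0..T} t" for i
  proof (rule AE_I2)
    fix t
    show "norm (s i t) \<le> (2 * Bx + 1) * indicator {0..T} t"
    proof (cases "t \<in> {0..T}")
      case True
      have "F (i + N) t \<le> 2 * Bx + 1" using bound[of "i + N" t] True Feq[OF True] by simp
      moreover have "F (i + N) t \<ge> 0" unfolding F_def by simp
      ultimately show ?thesis using True unfolding s_def by simp
    qed (simp add: s_def)
  qed
  have "(\<lambda>i. integral\<^sup>L lborel (s i)) \<longlonglongrightarrow> integral\<^sup>L lborel (\<lambda>t::real. 0::real)"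
  proof (rule Bochner_Integration.integral_dominated_convergence)
    show "(\<lambda>t::real. 0::real) \<in> borel_measurable lborel" by simp
    show "s i \<in> borel_measurable lborel" for i by (rule smeas)
    show "integrable lborel (\<lambda>t. (2 * Bx + 1) * indicator {0..T} t)" by (rule wint)
    show "AE t in lborel. (\<lambda>i. s i t) \<longlonglongrightarrow> 0" by (rule lim)
    show "AE t in lborel. norm (s i t) \<le> (2 * Bx + 1) * indicator {0..T} t" for i by (rule sbound)
  qed
  then have "(\<lambda>i. integral\<^sup>L lborel (s i)) \<longlonglongrightarrow> 0" by simp
  moreover have "integral\<^sup>L lborel (s i) = (LBINT t:{0..T}. norm ((xs (i + N) \<circ> ys (i + N)) t - (x \<circ> y) t))" for i
  proof -
    have "integral\<^sup>L lborel (s i) = (LBINT t:{0..T}. F (i + N) t)"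
      unfolding s_def set_lebesgue_integral_def by simp
    also have "\<dots> = (LBINT t:{0..T}. norm ((xs (i + N) \<circ> ys (i + N)) t - (x \<circ> y) t))"
      by (rule set_lebesgue_integral_cong) (auto simp: Feq)
    finally show ?thesis .
  qed
  ultimately have "(\<lambda>i. LBINT t:{0..T}. norm ((xs (i + N) \<circ> ys (i + N)) t - (x \<circ> y) t)) \<longlonglongrightarrow> 0"
    by simp
  then show ?thesis by (rule LIMSEQ_offset)
qed

theorem theorem3p10:
  fixes x :: "real \<Rightarrow> real ^ 'd" and y :: "real \<Rightarrow> real"
    and xs :: "nat \<Rightarrow> real \<Rightarrow> real ^ 'd" and ys :: "nat \<Rightarrow> real \<Rightarrow> real"
  assumes "cadlag x" and "y \<in> Dup"
    and "continuous_on {0..} x \<or> y \<in> Dupup"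
    and "\<And>n. cadlag (xs n)" and "\<And>n. ys n \<in> Dup"
    and "(\<lambda>n. dJ1 (xs n) x) \<longlonglongrightarrow> 0"
    and "(\<lambda>n. dM1 (ys n) y) \<longlonglongrightarrow> 0"
  shows "L1loc_tendsto (\<lambda>n. xs n \<circ> ys n) (x \<circ> y)"
  unfolding L1loc_tendsto_def using main_T[OF assms] by blast

end
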